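(* For every hypergraph $H$, $\chi_{min}\leq\chi_{cf}(H)$.
   Context: A hypergraph $H=(\mathcal{V},\mathcal{E})$ has finite vertex set and nonempty hyperedges. A conflict-free colouring of $H$ is a function $C:\mathcal{V}\to\{0,1,2,\dots\}$ such that every hyperedge $E$ contains a colour $j\geq1$ with $|E\cap C^{-1}(j)|=1$; $\chi_{cf}(H)$ is the minimum number of non-zero colours in such a colouring. A representative function is a map $t:\mathcal{E}\to\mathcal{V}$ with $t(E)\in E$; $R=t(\mathcal{E})$. The co-occurrence graph $G_{R,t}$ has vertex set $R$, with distinct $u,v$ adjacent iff some $E\in\mathcal{E}$ has $u,v\in E$ and $t(E)\in\{u,v\}$. $\chi_{min}$ is the minimum of the chromatic number $\chi(G_{R,t})$ over all representative functions $t$. *)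

theory Defs
  imports Main
begin

definition hypergraph :: "'a set \<Rightarrow> 'a set set \<Rightarrow> bool" where
  "hypergraph V Es \<longleftrightarrow> finite V \<and> (\<forall>E\<in>Es. E \<noteq> {} \<and> E \<subseteq> V)"

text \<open>C is a conflict-free colouring using only the non-zero colours 1..k (colour 0 = uncoloured).\<close>
definition cf_colouring :: "'a set \<Rightarrow> 'a set set \<Rightarrow> nat \<Rightarrow> ('a \<Rightarrow> nat) \<Rightarrow> bool" where
  "cf_colouring V Es k C \<longleftrightarrow> (\<forall>v\<in>V. C v \<le> k) \<and>
     (\<forall>E\<in>Es. \<exists>j\<ge>1. card (E \<inter> C -` {j}) = 1)"

definition chi_cf :: "'a set \<Rightarrow> 'a set set \<Rightarrow> nat" where
  "chi_cf V Es = (LEAST k. \<exists>C. cf_colouring V Es k C)"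

definition representative :: "'a set set \<Rightarrow> ('a set \<Rightarrow> 'a) \<Rightarrow> bool" where
  "representative Es t \<longleftrightarrow> (\<forall>E\<in>Es. t E \<in> E)"

definition cooc_adj :: "'a set set \<Rightarrow> ('a set \<Rightarrow> 'a) \<Rightarrow> 'a \<Rightarrow> 'a \<Rightarrow> bool" where
  "cooc_adj Es t u v \<longleftrightarrow> u \<in> t ` Es \<and> v \<in> t ` Es \<and> u \<noteq> v \<and>
     (\<exists>E\<in>Es. u \<in> E \<and> v \<in> E \<and> t E \<in> {u, v})"

definition chromatic_number :: "'a set \<Rightarrow> ('a \<Rightarrow> 'a \<Rightarrow> bool) \<Rightarrow> nat" where
  "chromatic_number R adj = (LEAST k. \<exists>c :: 'a \<Rightarrow> nat.
     (\<forall>v\<in>R. c v < k) \<and> (\<forall>u\<in>R. \<forall>v\<in>R. adj u v \<longrightarrow> c u \<noteq> c v))"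

definition chi_min :: "'a set set \<Rightarrow> nat" where
  "chi_min Es = (LEAST k. \<exists>t. representative Es t \<and>
     chromatic_number (t ` Es) (cooc_adj Es t) = k)"

end

theory Submission
  imports Defs
begin

lemma hyp_facts:
  assumes "hypergraph V Es"
  shows "finite V" "\<And>E. E \<in> Es \<Longrightarrow> E \<noteq> {}" "\<And>E. E \<in> Es \<Longrightarrow> E \<subseteq> V"
  using assms unfolding hypergraph_def by auto

lemma cf_exists:
  assumes "hypergraph V Es"
  shows "\<exists>k C. cf_colouring V Es k C"
proof -
  note H = hyp_facts[OF assms]
  obtain f where f: "bij_betw f V {0..<card V}"
    using ex_bij_betw_finite_nat[OF H(1)] by (elim exE)
  have inj: "inj_on f V" using f by (rule bij_betw_imp_inj_on)
  define C where "C v = (if v \<in> V then f v + 1 else 0)" for v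
  have "cf_colouring V Es (card V) C"
    unfolding cf_colouring_def
  proof (intro conjI ballI)
    fix v assume vV: "v \<in> V"
    have "f v \<in> {0..<card V}" using f vV by (rule bij_betw_apply)
    hence "f v < card V" by simp
    thus "C v \<le> card V" using vV unfolding C_def by simp
  next
    fix E assume E: "E \<in> Es"
    have EV: "E \<subseteq> V" using H(3)[OF E] .
    obtain v where v: "v \<in> E" using H(2)[OF E] by blast
    have eqv: "E \<inter> C -` {C v} = {v}"
    proof (rule equalityI)
      show "E \<inter> C -` {C v} \<subseteq> {v}"
      proof (rule subsetI)
        fix w assume w: "w \<in> E \<inter> C -` {C v}"
        have wV: "w \<in> V" using w EV by blast
        have vV: "v \<in> V" using v EV by blast
        have "C w = C v" using w by simp
        hence fw: "f w = f v" using wV vV unfolding C_def by simp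
        have "w = v" using inj fw wV vV by (rule inj_onD)
        thus "w \<in> {v}" by simp
      qed
    next
      show "{v} \<subseteq> E \<inter> C -` {C v}" using v by simp
    qed
    have "C v \<ge> 1" using v EV unfolding C_def by auto
    thus "\<exists>j\<ge>1. card (E \<inter> C -` {j}) = 1" using eqv by (intro exI[of _ "C v"] conjI) simp_all
  qed
  thus ?thesis by (intro exI)
qed

theorem lemma2:
  fixes V :: "'a set" and Es :: "'a set set"
  assumes "hypergraph V Es"
  shows "chi_min Es \<le> chi_cf V Es"
proof -
  note H = hyp_facts[OF assms]
  define k where "k = chi_cf V Es"
  have "\<exists>C. cf_colouring V Es k C"
    unfolding k_def chi_cf_def using cf_exists[OF assms] by (elim exE) (rule LeastI_ex, blast)
  then obtain C where C: "cf_colouring V Es k C" by (elim exE)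
  define P where "P E v \<longleftrightarrow> v \<in> E \<and> C v \<ge> 1 \<and> card (E \<inter> C -` {C v}) = 1" for E v
  define t where "t E = (SOME v. P E v)" for E
  have tE: "P E (t E)" if "E \<in> Es" for E
  proof -
    have "\<forall>E\<in>Es. \<exists>j\<ge>1. card (E \<inter> C -` {j}) = 1" using C unfolding cf_colouring_def by (rule conjunct2)
    hence "\<exists>j\<ge>1. card (E \<inter> C -` {j}) = 1" using that by (rule bspec)
    then obtain j where j: "j \<ge> 1" "card (E \<inter> C -` {j}) = 1" by (elim exE conjE)
    from j(2) obtain v where vs: "E \<inter> C -` {j} = {v}" by (rule card_1_singletonE)
    hence "v \<in> E" "C v = j" by auto
    hence "P E v" using j vs unfolding P_def by simp
    thus ?thesis unfolding t_def by (rule someI)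
  qed
  have rep: "representative Es t" unfolding representative_def using tE unfolding P_def by blast
  define c where "c v = C v - 1" for v
  have "chromatic_number (t ` Es) (cooc_adj Es t) \<le> k"
    unfolding chromatic_number_def
  proof (rule Least_le, rule exI[of _ c], intro conjI ballI impI)
    fix v assume "v \<in> t ` Es"
    then obtain E where E: "E \<in> Es" "v = t E" by blast
    have PE: "P E v" using tE[OF E(1)] E(2) by simp
    hence "v \<in> V" using H(3)[OF E(1)] unfolding P_def by blast
    hence "C v \<le> k" using C unfolding cf_colouring_def by blast
    thus "c v < k" using PE unfolding c_def P_def by auto
  next
    fix u v assume u: "u \<in> t ` Es" and v: "v \<in> t ` Es" and adj: "cooc_adj Es t u v"
    have Cu: "C u \<ge> 1" "C v \<ge> 1" using u v tE unfolding P_def by auto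
    obtain E where E: "E \<in> Es" "u \<in> E" "v \<in> E" "t E \<in> {u, v}" "u \<noteq> v"
      using adj unfolding cooc_adj_def by blast
    have PE: "card (E \<inter> C -` {C (t E)}) = 1" using tE[OF E(1)] unfolding P_def by simp
    show "c u \<noteq> c v"
    proof
      assume "c u = c v"
      hence eq: "C u = C v" using Cu unfolding c_def by simp
      have "C (t E) = C u" using E(4) eq by auto
      hence sub: "{u, v} \<subseteq> E \<inter> C -` {C (t E)}" using E(2,3) eq by auto
      have fin: "finite (E \<inter> C -` {C (t E)})" using PE by (intro card_ge_0_finite) simp
      have "card {u, v} \<le> card (E \<inter> C -` {C (t E)})" using fin sub by (rule card_mono)
      hence "card {u, v} \<le> 1" using PE by simp
      thus False using E(5) by simp
    qed
  qed
  moreover have "chi_min Es \<le> chromatic_number (t ` Es) (cooc_adj Es t)"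
    unfolding chi_min_def by (rule Least_le) (use rep in blast)
  ultimately show ?thesis unfolding k_def by simp
qed

end
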